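(* Let $n\in\mathbb{N}$, $H=H^\top\in\mathbb{R}^{2n\times2n}$, $\mathcal H(x)=\frac12x^\top Hx$, and $\Phi^{\Delta T}(x)=M(\Delta T)x$ with \[ M(\Delta T):=e^{\Delta T J_{2n}H}=\begin{pmatrix}A(\Delta T)&B(\Delta T)\\C(\Delta T)&D(\Delta T)\end{pmatrix} \] ($n\times n$ blocks). Let $\mathcal R:=\{\Delta T\in\mathbb{R}:\det D(\Delta T)=0\}$. Then $\mathcal R$ is discrete (has no finite accumulation point). Moreover, for any $\Delta T\notin\mathcal R$ with $\Delta T\neq0$: the map $\boldsymbol\Psi(q,p):=(q,C(\Delta T)q+D(\Delta T)p)$ is a diffeomorphism of $\mathbb{R}^{2n}$ onto $\mathbb{R}^{2n}$, $D(\Delta T)$ is invertible, and there exists $S\in C^1(\mathbb{R}^{2n})$, unique up to an additive constant, such that, with $(q,\mathbf p(q,P)):=\boldsymbol\Psi^{-1}(q,P)$ and $\mathbf Q(q,P):=A(\Delta T)q+B(\Delta T)\mathbf p(q,P)$, \[ \mathbf p(q,P)=\partial_qS(q,P),\qquad \mathbf Q(q,P)=\partial_PS(q,P)\quad\text{for all }(q,P)\in\mathbb{R}^{2n}, \] and $S^{\Delta T}(q,P):=\frac1{\Delta T}(S(q,P)-q^\top P)$ satisfies $J_{2n}^\top\frac{\Phi^{\Delta T}(x)-x}{\Delta T}=\nabla_{(q,P)}S^{\Delta T}(I_1x+I_2\Phi^{\Delta T}(x))$ for all $x\in\mathbb{R}^{2n}$.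
   Context: $J_{2n}=\begin{bmatrix}0_n&I_n\\-I_n&0_n\end{bmatrix}$, $I_1=\begin{bmatrix}I_n&0\\0&0\end{bmatrix}$, $I_2=\begin{bmatrix}0&0\\0&I_n\end{bmatrix}$; $x=(q,p)\in\mathbb{R}^n\times\mathbb{R}^n$. $\Phi^{\Delta T}$ is the time-$\Delta T$ flow of $\dot x=J_{2n}\nabla\mathcal H(x)=J_{2n}Hx$. *)

theory Defs
  imports "HOL-Analysis.Analysis"
begin

text \<open>Phase space R^{2n} is modelled as real^('n + 'n): index Inl k is q_k, index Inr k is p_k.\<close>

type_synonym 'n phase = "real ^ ('n + 'n)"
type_synonym 'n pmat = "real ^ ('n + 'n) ^ ('n + 'n)"

fun matpow :: "real ^ 'm ^ 'm \<Rightarrow> nat \<Rightarrow> real ^ 'm ^ 'm" where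
  "matpow A 0 = mat 1"
| "matpow A (Suc k) = A ** matpow A k"

definition mexp :: "real ^ 'm ^ 'm \<Rightarrow> real ^ 'm ^ 'm" where
  "mexp X = (\<Sum>k. (1 / fact k) *\<^sub>R matpow X k)"

definition Jmat :: "('n::finite) pmat" where
  "Jmat = (\<chi> i j. case (i, j) of
       (Inl a, Inr b) \<Rightarrow> (if a = b then 1 else 0)
     | (Inr a, Inl b) \<Rightarrow> (if a = b then -1 else 0)
     | _ \<Rightarrow> 0)"

definition I1mat :: "('n::finite) pmat" where
  "I1mat = (\<chi> i j. case (i, j) of (Inl a, Inl b) \<Rightarrow> (if a = b then 1 else 0) | _ \<Rightarrow> 0)"
definition I2mat :: "('n::finite) pmat" where
  "I2mat = (\<chi> i j. case (i, j) of (Inr a, Inr b) \<Rightarrow> (if a = b then 1 else 0) | _ \<Rightarrow> 0)"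

definition Mflow :: "('n::finite) pmat \<Rightarrow> real \<Rightarrow> 'n pmat" where
  "Mflow H t = mexp (t *\<^sub>R (Jmat ** H))"

definition blkA :: "('n::finite) pmat \<Rightarrow> real ^ 'n ^ 'n" where
  "blkA M = (\<chi> i j. M $ Inl i $ Inl j)"
definition blkB :: "('n::finite) pmat \<Rightarrow> real ^ 'n ^ 'n" where
  "blkB M = (\<chi> i j. M $ Inl i $ Inr j)"
definition blkC :: "('n::finite) pmat \<Rightarrow> real ^ 'n ^ 'n" where
  "blkC M = (\<chi> i j. M $ Inr i $ Inl j)"
definition blkD :: "('n::finite) pmat \<Rightarrow> real ^ 'n ^ 'n" where
  "blkD M = (\<chi> i j. M $ Inr i $ Inr j)"

definition qp :: "real ^ ('n::finite) \<Rightarrow> real ^ 'n \<Rightarrow> 'n phase" where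
  "qp q p = (\<chi> i. case i of Inl k \<Rightarrow> q $ k | Inr k \<Rightarrow> p $ k)"
definition qpart :: "('n::finite) phase \<Rightarrow> real ^ 'n" where
  "qpart x = (\<chi> k. x $ Inl k)"
definition ppart :: "('n::finite) phase \<Rightarrow> real ^ 'n" where
  "ppart x = (\<chi> k. x $ Inr k)"

definition C1_UNIV :: "('a::euclidean_space \<Rightarrow> 'b::euclidean_space) \<Rightarrow> bool" where
  "C1_UNIV f \<longleftrightarrow> (\<exists>f'. (\<forall>x. (f has_derivative blinfun_apply (f' x)) (at x)) \<and> continuous_on UNIV f')"

definition diffeo_UNIV :: "('a::euclidean_space \<Rightarrow> 'a) \<Rightarrow> bool" where
  "diffeo_UNIV f \<longleftrightarrow> bij f \<and> C1_UNIV f \<and> C1_UNIV (inv f)"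

end

theory Submission
  imports Defs "HOL-Complex_Analysis.Conformal_Mappings"
begin


definition ent :: "real^'m^'m \<Rightarrow> 'm::finite \<Rightarrow> 'm \<Rightarrow> nat \<Rightarrow> real" where
  "ent X i j k = matpow X k $ i $ j / fact k"

definition bnd :: "real^'m^'m \<Rightarrow> real" where
  "bnd X = (\<Sum>i\<in>UNIV. \<Sum>l\<in>UNIV. \<bar>X$i$l\<bar>)"

lemma bnd_nonneg: "0 \<le> bnd (X::real^'m::finite^'m)"
  unfolding bnd_def by (intro sum_nonneg) auto

lemma row_le_bnd: "(\<Sum>l\<in>UNIV. \<bar>X$i$l\<bar>) \<le> bnd (X::real^'m::finite^'m)"
  unfolding bnd_def by (rule member_le_sum) (auto intro: sum_nonneg)

lemma matpow_bound: "\<bar>matpow (X::real^'m::finite^'m) k $ i $ j\<bar> \<le> bnd X ^ k"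
proof (induction k arbitrary: i j)
  case 0
  then show ?case by (simp add: mat_def)
next
  case (Suc k)
  have "\<bar>matpow X (Suc k) $ i $ j\<bar> = \<bar>\<Sum>l\<in>UNIV. X$i$l * matpow X k $ l $ j\<bar>"
    by (simp add: matrix_matrix_mult_def)
  also have "\<dots> \<le> (\<Sum>l\<in>UNIV. \<bar>X$i$l\<bar> * bnd X ^ k)"
    by (rule order_trans[OF sum_abs]) (auto simp: abs_mult intro!: sum_mono mult_left_mono Suc.IH)
  also have "\<dots> = (\<Sum>l\<in>UNIV. \<bar>X$i$l\<bar>) * bnd X ^ k" by (simp add: sum_distrib_right)
  also have "\<dots> \<le> bnd X * bnd X ^ k"
    by (rule mult_right_mono[OF row_le_bnd]) (simp add: bnd_nonneg)
  finally show ?case by simp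
qed

lemma ent_summable:
  fixes z :: "'a::{real_normed_field,banach}"
  shows "summable (\<lambda>k. of_real (ent X i j k) * z^k)"
proof (rule summable_comparison_test'[where N=0])
  show "summable (\<lambda>k. inverse (fact k) * (bnd X * norm z) ^ k)" by (rule summable_exp)
  fix k :: nat
  have "norm (of_real (ent X i j k) * z^k) = \<bar>matpow X k $ i $ j\<bar> / fact k * norm z ^ k"
    unfolding ent_def norm_mult norm_power norm_of_real by (simp add: norm_divide)
  also have "\<dots> \<le> bnd X ^ k / fact k * norm z ^ k"
    by (intro mult_right_mono divide_right_mono matpow_bound) auto
  also have "\<dots> = inverse (fact k) * (bnd X * norm z) ^ k"
    by (simp add: power_mult_distrib field_simps)
  finally show "norm (of_real (ent X i j k) * z^k) \<le> inverse (fact k) * (bnd X * norm z) ^ k" .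
qed

lemma ent_summable_real: "summable (\<lambda>k. ent X i j k * (t::real)^k)"
  using ent_summable[of X i j t] by simp

lemma matpow_scale: "matpow (t *\<^sub>R X) k = t^k *\<^sub>R matpow (X::real^'m::finite^'m) k"
  by (induction k) (simp_all add: scalar_matrix_assoc matrix_scalar_ac mult.commute)

lemma sums_vec: "(\<And>i. (\<lambda>k. f k $ i) sums (s $ i)) \<Longrightarrow> f sums (s::'a::real_normed_vector^'n::finite)"
  unfolding sums_def by (rule vec_tendstoI) (simp add: sum_component)

lemma mexp_entry: "mexp (t *\<^sub>R X) $ i $ j = (\<Sum>k. ent (X::real^'m::finite^'m) i j k * t^k)"
proof -
  have e: "\<And>i j k. ((1 / fact k) *\<^sub>R matpow (t *\<^sub>R X) k) $ i $ j = ent X i j k * t^k"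
    by (simp add: matpow_scale ent_def)
  have "(\<lambda>k. (1 / fact k) *\<^sub>R matpow (t *\<^sub>R X) k) sums (\<chi> i j. \<Sum>k. ent X i j k * t^k)"
    by (intro sums_vec) (simp only: e vec_lambda_beta, rule summable_sums[OF ent_summable_real])
  then show ?thesis unfolding mexp_def by (simp add: sums_iff)
qed

lemma mexp_zero: "mexp (0 *\<^sub>R X) = mat (1::real)"
proof -
  have "mexp (0 *\<^sub>R X) $ i $ j = ent X i j 0" for i j
    using mexp_entry[of 0 X i j] powser_zero[of "ent X i j"] by (simp only:)
  then show ?thesis by (simp add: vec_eq_iff ent_def)
qed



lemma ent_Suc: "of_nat (Suc n) * ent X i j (Suc n) = (\<Sum>l\<in>UNIV. X$i$l * ent X l j n)"
  unfolding ent_def by (simp add: matrix_matrix_mult_def sum_divide_distrib sum_distrib_left)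

lemma mexp_deriv: "((\<lambda>s. mexp (s *\<^sub>R X) $ i $ j) has_real_derivative (X ** mexp (t *\<^sub>R X)) $ i $ j) (at t)"
proof -
  have "((\<lambda>s. \<Sum>k. ent X i j k * s^k) has_real_derivative (\<Sum>n. diffs (ent X i j) n * t^n)) (at t)"
    by (rule termdiffs_strong_converges_everywhere) (rule ent_summable_real)
  moreover have "(\<Sum>n. diffs (ent X i j) n * t^n) = (X ** mexp (t *\<^sub>R X)) $ i $ j"
  proof -
    have "(\<Sum>n. diffs (ent X i j) n * t^n) = (\<Sum>n. \<Sum>l\<in>UNIV. X$i$l * (ent X l j n * t^n))"
      unfolding diffs_def ent_Suc by (simp add: sum_distrib_right mult.assoc)
    also have "\<dots> = (\<Sum>l\<in>UNIV. \<Sum>n. X$i$l * (ent X l j n * t^n))"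
      by (rule suminf_sum) (intro summable_mult ent_summable_real)
    also have "\<dots> = (\<Sum>l\<in>UNIV. X$i$l * (\<Sum>n. ent X l j n * t^n))"
      by (simp add: suminf_mult ent_summable_real)
    finally show ?thesis by (simp add: matrix_matrix_mult_def mexp_entry)
  qed
  ultimately show ?thesis by (simp add: mexp_entry)
qed

definition entC :: "real^'m^'m \<Rightarrow> 'm::finite \<Rightarrow> 'm \<Rightarrow> complex \<Rightarrow> complex" where
  "entC X i j z = (\<Sum>k. of_real (ent X i j k) * z^k)"

lemma entC_holo: "entC X i j holomorphic_on UNIV"
  unfolding holomorphic_on_def field_differentiable_def entC_def
proof
  fix x :: complex
  have "((\<lambda>z. \<Sum>k. of_real (ent X i j k) * z^k) has_field_derivative
     (\<Sum>n. diffs (\<lambda>k. of_real (ent X i j k)) n * x ^ n)) (at x)"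
    by (rule termdiffs_strong_converges_everywhere) (rule ent_summable)
  then show "\<exists>f'. ((\<lambda>z. \<Sum>k. of_real (ent X i j k) * z^k) has_field_derivative f') (at x within UNIV)"
    by auto
qed

lemma entC_real: "entC X i j (of_real t) = of_real (mexp (t *\<^sub>R X) $ i $ j)"
  by (simp add: entC_def mexp_entry suminf_of_real[OF ent_summable_real])

definition detC :: "('n::finite) pmat \<Rightarrow> complex \<Rightarrow> complex" where
  "detC X z = (\<Sum>p | p permutes (UNIV::'n set). of_int (sign p) * (\<Prod>i\<in>UNIV. entC X (Inr i) (Inr (p i)) z))"

lemma detC_holo: "detC X holomorphic_on UNIV"
  unfolding detC_def
  by (intro holomorphic_on_sum holomorphic_on_mult holomorphic_on_const holomorphic_on_prod entC_holo)

lemma detC_real: "detC X (of_real t) = of_real (det (blkD (mexp (t *\<^sub>R X))))"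
  by (simp add: detC_def det_def blkD_def entC_real)

lemma blkD_mat1: "blkD (mat 1 :: ('n::finite) pmat) = mat 1"
  by (simp add: blkD_def mat_def vec_eq_iff)

lemma part1: "\<not> t islimpt {s. det (blkD (mexp (s *\<^sub>R (X::('n::finite) pmat)))) = 0}"
proof
  define Z where "Z = {s. det (blkD (mexp (s *\<^sub>R X))) = 0}"
  assume "t islimpt {s. det (blkD (mexp (s *\<^sub>R (X::('n::finite) pmat)))) = 0}"
  then have lim: "t islimpt Z" by (simp add: Z_def)
  have "complex_of_real t islimpt (of_real ` Z)"
    unfolding islimpt_approachable
  proof (intro allI impI)
    fix e :: real assume "e > 0"
    then obtain x where "x \<in> Z" "x \<noteq> t" "dist x t < e" using lim unfolding islimpt_approachable by blast
    then show "\<exists>x'\<in>complex_of_real ` Z. x' \<noteq> complex_of_real t \<and> dist x' (complex_of_real t) < e"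
      by (intro bexI[of _ "complex_of_real x"]) (auto simp: dist_of_real)
  qed
  then have "detC X 0 = 0"
    by (rule analytic_continuation[OF detC_holo open_UNIV connected_UNIV subset_UNIV UNIV_I _ _ UNIV_I])
       (auto simp: detC_real Z_def)
  moreover have "detC X 0 = 1"
    using detC_real[of X 0] by (simp only: mexp_zero blkD_mat1 det_I) simp
  ultimately show False by simp
qed



lemma sum_UNIV_plus:
  "(\<Sum>a\<in>(UNIV::('a::finite + 'b::finite) set). f a) = (\<Sum>x\<in>UNIV. f (Inl x)) + (\<Sum>y\<in>UNIV. f (Inr y))"
  by (subst UNIV_Plus_UNIV[symmetric], subst sum.Plus) auto

lemma J_simps [simp]:
  "Jmat $ Inl a $ Inl b = 0" "Jmat $ Inl a $ Inr b = (if a = b then 1 else 0)"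
  "Jmat $ Inr a $ Inl b = (if a = b then -1 else 0)" "Jmat $ Inr a $ Inr b = 0"
  by (simp_all add: Jmat_def)

lemma JJ: "Jmat ** Jmat = - mat 1"
  unfolding vec_eq_iff
proof (intro allI)
  fix i j :: "'a + 'a"
  show "(Jmat ** Jmat) $ i $ j = (- mat 1 :: 'a pmat) $ i $ j"
    by (cases i; cases j) (simp_all add: matrix_matrix_mult_def sum_UNIV_plus mat_def if_distrib if_distribR cong: if_cong)
qed

lemma JT: "transpose Jmat = - Jmat"
  unfolding vec_eq_iff
proof (intro allI)
  fix i j :: "'a + 'a"
  show "(transpose Jmat) $ i $ j = (- Jmat :: 'a pmat) $ i $ j"
    by (cases i; cases j) (simp_all add: transpose_def)
qed

lemma MTJM_entry: "(transpose M ** Jmat ** M) $ a $ b = (\<Sum>k\<in>UNIV. M $ Inl k $ a * M $ Inr k $ b - M $ Inr k $ a * M $ Inl k $ b)"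
  by (simp add: matrix_matrix_mult_def transpose_def sum_UNIV_plus sum_distrib_right sum_subtractf
       if_distrib if_distribR sum.distrib sum_negf algebra_simps cong: if_cong)

lemma MJMT_entry: "(M ** Jmat ** transpose M) $ a $ b = (\<Sum>k\<in>UNIV. M $ a $ Inl k * M $ b $ Inr k - M $ a $ Inr k * M $ b $ Inl k)"
  by (simp add: matrix_matrix_mult_def transpose_def sum_UNIV_plus sum_distrib_right sum_subtractf
       if_distrib if_distribR sum.distrib sum_negf algebra_simps cong: if_cong)



lemma mneg_right: "A ** (- B) = - (A ** (B::real^'n::finite^'n))"
  by (simp add: vec_eq_iff matrix_matrix_mult_def sum_negf)
lemma mneg_left: "(- A) ** B = - (A ** (B::real^'n::finite^'n))"
  by (simp add: vec_eq_iff matrix_matrix_mult_def sum_negf)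
lemma mzero_right: "A ** (0::real^'n::finite^'n) = 0"
  by (simp add: vec_eq_iff matrix_matrix_mult_def)

lemma mrdistrib: "(A + B) ** C = A ** C + B ** (C::real^'n::finite^'n)"
  by (simp add: vec_eq_iff matrix_matrix_mult_def sum.distrib distrib_right)

lemma mmult_deriv:
  assumes F: "\<And>i j. ((\<lambda>s. F s $i$j) has_real_derivative F' $i$j) (at t)"
  and G: "\<And>i j. ((\<lambda>s. G s $i$j) has_real_derivative G' $i$j) (at t)"
  shows "((\<lambda>s. (F s ** G s) $i$j) has_real_derivative (F' ** G t + F t ** G') $i$j) (at t)"
proof -
  have "((\<lambda>s. \<Sum>k\<in>UNIV. F s$i$k * G s$k$j) has_real_derivative (\<Sum>k\<in>UNIV. F t$i$k * G'$k$j + F'$i$k * G t$k$j)) (at t)"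
    by (intro DERIV_sum DERIV_mult' F G)
  then show ?thesis by (simp add: matrix_matrix_mult_def sum.distrib add.commute)
qed

lemma sympl:
  fixes H :: "('n::finite) pmat"
  assumes symH: "transpose H = H"
  shows "transpose (Mflow H t) ** Jmat ** Mflow H t = Jmat"
proof -
  define X where "X = Jmat ** H"
  define M where "M s = mexp (s *\<^sub>R X)" for s
  have dM: "\<And>i j. ((\<lambda>s. M s $i$j) has_real_derivative (X ** M s)$i$j) (at s)" for s
    unfolding M_def by (rule mexp_deriv)
  have dMT: "\<And>i j. ((\<lambda>s. transpose (M s) $i$j) has_real_derivative (transpose (X ** M s))$i$j) (at s)" for s
    using dM by (simp add: transpose_def)
  have dJ: "\<And>i j. ((\<lambda>s. Jmat $i$j) has_real_derivative (0::'n pmat)$i$j) (at s)" for s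
    by simp
  have d1: "\<And>i j. ((\<lambda>s. (transpose (M s) ** Jmat)$i$j) has_real_derivative
      (transpose (X ** M s) ** Jmat + transpose (M s) ** 0)$i$j) (at s)" for s
    by (rule mmult_deriv[OF dMT dJ])
  have d2: "((\<lambda>s. (transpose (M s) ** Jmat ** M s)$i$j) has_real_derivative
      ((transpose (X ** M s) ** Jmat + transpose (M s) ** 0) ** M s + (transpose (M s) ** Jmat) ** (X ** M s))$i$j) (at s)" for s i j
    by (rule mmult_deriv[OF d1 dM])
  have z: "(transpose (X ** M s) ** Jmat + transpose (M s) ** 0) ** M s + (transpose (M s) ** Jmat) ** (X ** M s) = 0" for s
  proof -
    have "transpose (X ** M s) = transpose (M s) ** H ** (- Jmat)"
      by (simp add: X_def matrix_transpose_mul symH JT matrix_mul_assoc)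
    then have a: "transpose (X ** M s) ** Jmat = transpose (M s) ** H"
      by (simp add: matrix_mul_assoc[symmetric] mneg_left mneg_right JJ)
    have "(transpose (M s) ** Jmat) ** (X ** M s) = transpose (M s) ** (Jmat ** Jmat) ** (H ** M s)"
      by (simp add: X_def matrix_mul_assoc)
    also have "\<dots> = - (transpose (M s) ** H ** M s)"
      by (simp add: JJ mneg_right mneg_left matrix_mul_assoc)
    finally have b: "(transpose (M s) ** Jmat) ** (X ** M s) = - (transpose (M s) ** H ** M s)" .
    show ?thesis unfolding mrdistrib a b by (simp add: mzero_right)
  qed
  have "(transpose (M t) ** Jmat ** M t)$i$j = (transpose (M 0) ** Jmat ** M 0)$i$j" for i j
  proof (rule DERIV_isconst_all[where f="\<lambda>s. (transpose (M s) ** Jmat ** M s)$i$j"], intro allI)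
    fix s
    show "((\<lambda>s. (transpose (M s) ** Jmat ** M s)$i$j) has_real_derivative 0) (at s)"
      using d2[where s=s and i=i and j=j] unfolding z by simp
  qed
  then have "transpose (M t) ** Jmat ** M t = transpose (M 0) ** Jmat ** M 0"
    by (simp add: vec_eq_iff)
  also have "\<dots> = Jmat" unfolding M_def mexp_zero by (simp add: transpose_mat)
  finally show ?thesis by (simp add: M_def Mflow_def X_def)
qed



lemma qpart_qp [simp]: "qpart (qp a b) = a" by (simp add: qpart_def qp_def vec_eq_iff)
lemma ppart_qp [simp]: "ppart (qp a b) = b" by (simp add: ppart_def qp_def vec_eq_iff)
lemma qp_parts [simp]: "qp (qpart x) (ppart x) = x"
  unfolding vec_eq_iff
proof
  fix i show "qp (qpart x) (ppart x) $ i = x $ i"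
    by (cases i) (simp_all add: qpart_def ppart_def qp_def)
qed
lemma qp_eq_iff: "x = y \<longleftrightarrow> qpart x = qpart y \<and> ppart x = ppart y"
  by (metis qp_parts)
lemma qpart_add [simp]: "qpart (x + y) = qpart x + qpart y" by (simp add: qpart_def vec_eq_iff)
lemma ppart_add [simp]: "ppart (x + y) = ppart x + ppart y" by (simp add: ppart_def vec_eq_iff)
lemma qpart_diff [simp]: "qpart (x - y) = qpart x - qpart y" by (simp add: qpart_def vec_eq_iff)
lemma ppart_diff [simp]: "ppart (x - y) = ppart x - ppart y" by (simp add: ppart_def vec_eq_iff)
lemma qpart_scale [simp]: "qpart (c *\<^sub>R x) = c *\<^sub>R qpart x" by (simp add: qpart_def vec_eq_iff)
lemma ppart_scale [simp]: "ppart (c *\<^sub>R x) = c *\<^sub>R ppart x" by (simp add: ppart_def vec_eq_iff)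
lemma qpart_zero [simp]: "qpart 0 = 0" by (simp add: qpart_def vec_eq_iff)
lemma ppart_zero [simp]: "ppart 0 = 0" by (simp add: ppart_def vec_eq_iff)

lemma qp_add: "qp a b + qp c d = qp (a + c) (b + d)" by (simp add: qp_eq_iff)
lemma qp_scale: "c *\<^sub>R qp a b = qp (c *\<^sub>R a) (c *\<^sub>R b)" by (simp add: qp_eq_iff)

lemma linear_qpart: "linear qpart" by (rule linearI) simp_all
lemma linear_ppart: "linear ppart" by (rule linearI) simp_all

lemma inner_split: "x \<bullet> y = qpart x \<bullet> qpart y + ppart x \<bullet> ppart y"
  by (simp add: inner_vec_def sum_UNIV_plus qpart_def ppart_def)

lemma inner_qp: "qp a b \<bullet> qp c d = a \<bullet> c + b \<bullet> d"
  by (simp add: inner_split)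

lemma linear_qp_fun:
  assumes "linear f" "linear g"
  shows "linear (\<lambda>x. qp (f x) (g x))"
  using assms by (intro linearI) (simp_all add: qp_eq_iff linear_add linear_scale)

lemma mv_inner: "(A *v x) \<bullet> y = x \<bullet> (transpose A *v (y::real^'n::finite))"
proof -
  have "(A *v x) \<bullet> y = (\<Sum>i\<in>UNIV. \<Sum>j\<in>UNIV. A$i$j * x$j * y$i)"
    by (simp add: inner_vec_def matrix_vector_mult_def sum_distrib_right)
  also have "\<dots> = (\<Sum>j\<in>UNIV. \<Sum>i\<in>UNIV. A$i$j * x$j * y$i)" by (rule sum.swap)
  also have "\<dots> = x \<bullet> (transpose A *v y)"
    by (simp add: inner_vec_def matrix_vector_mult_def transpose_def sum_distrib_left ac_simps)
  finally show ?thesis .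
qed

lemma M_qpart: "qpart (M *v x) = blkA M *v qpart x + blkB M *v ppart x"
  by (simp add: vec_eq_iff qpart_def ppart_def blkA_def blkB_def matrix_vector_mult_def sum_UNIV_plus)
lemma M_ppart: "ppart (M *v x) = blkC M *v qpart x + blkD M *v ppart x"
  by (simp add: vec_eq_iff qpart_def ppart_def blkC_def blkD_def matrix_vector_mult_def sum_UNIV_plus)

lemma I12: "I1mat *v x + I2mat *v y = qp (qpart x) (ppart y)"
  unfolding vec_eq_iff
proof
  fix i show "(I1mat *v x + I2mat *v y) $ i = qp (qpart x) (ppart y) $ i"
    by (cases i) (simp_all add: I1mat_def I2mat_def matrix_vector_mult_def sum_UNIV_plus qp_def qpart_def ppart_def
        if_distrib if_distribR cong: if_cong)
qed

lemma JT_mult: "transpose Jmat *v v = qp (- ppart v) (qpart v)"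
  unfolding vec_eq_iff
proof
  fix i show "(transpose Jmat *v v) $ i = qp (- ppart v) (qpart v) $ i"
    by (cases i) (simp_all add: transpose_def matrix_vector_mult_def sum_UNIV_plus qp_def qpart_def ppart_def
        if_distrib if_distribR cong: if_cong)
qed



lemma sympl2:
  fixes M :: "('n::finite) pmat"
  assumes "transpose M ** Jmat ** M = Jmat"
  shows "M ** Jmat ** transpose M = Jmat"
proof -
  have "(- (Jmat ** transpose M ** Jmat)) ** M = - (Jmat ** (transpose M ** Jmat ** M))"
    by (simp only: mneg_left matrix_mul_assoc)
  also have "\<dots> = mat 1" using assms by (simp add: JJ)
  finally have "M ** (- (Jmat ** transpose M ** Jmat)) = mat 1"
    by (rule matrix_left_right_inverse1)
  then have "- (M ** Jmat ** transpose M ** Jmat) = mat 1"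
    by (simp only: mneg_right matrix_mul_assoc)
  then have "- (M ** Jmat ** transpose M ** Jmat) ** Jmat = Jmat" by simp
  moreover have "- (M ** Jmat ** transpose M ** Jmat) ** Jmat = M ** Jmat ** transpose M"
    by (simp only: mneg_left matrix_mul_assoc[symmetric] JJ mneg_right) simp
  ultimately show ?thesis by simp
qed

lemma blocks:
  fixes M :: "('n::finite) pmat"
  assumes "transpose M ** Jmat ** M = Jmat"
  shows "transpose (blkD M) ** blkA M - transpose (blkB M) ** blkC M = mat 1"
    "transpose (blkD M) ** blkB M = transpose (blkB M) ** blkD M"
    "blkC M ** transpose (blkD M) = blkD M ** transpose (blkC M)"
proof -
  have e: "(\<Sum>k\<in>UNIV. M $ Inl k $ a * M $ Inr k $ b - M $ Inr k $ a * M $ Inl k $ b) = Jmat $ a $ b" for a b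
    using assms MTJM_entry[of M a b] by simp
  have f: "(\<Sum>k\<in>UNIV. M $ a $ Inl k * M $ b $ Inr k - M $ a $ Inr k * M $ b $ Inl k) = Jmat $ a $ b" for a b
    using sympl2[OF assms] MJMT_entry[of M a b] by simp
  show "transpose (blkD M) ** blkA M - transpose (blkB M) ** blkC M = mat 1"
    unfolding vec_eq_iff
  proof (intro allI)
    fix i j
    have "(\<Sum>k\<in>UNIV. M $ Inl k $ Inr i * M $ Inr k $ Inl j - M $ Inr k $ Inr i * M $ Inl k $ Inl j) = - (if i = j then 1 else 0)"
      using e[of "Inr i" "Inl j"] by simp
    then show "(transpose (blkD M) ** blkA M - transpose (blkB M) ** blkC M) $ i $ j = mat 1 $ i $ j"
      by (simp add: matrix_matrix_mult_def transpose_def blkA_def blkB_def blkC_def blkD_def mat_def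
        sum_subtractf)
  qed
  show "transpose (blkD M) ** blkB M = transpose (blkB M) ** blkD M"
    unfolding vec_eq_iff
  proof (intro allI)
    fix i j
    have "(\<Sum>k\<in>UNIV. M $ Inl k $ Inr i * M $ Inr k $ Inr j - M $ Inr k $ Inr i * M $ Inl k $ Inr j) = 0"
      using e[of "Inr i" "Inr j"] by simp
    then show "(transpose (blkD M) ** blkB M) $ i $ j = (transpose (blkB M) ** blkD M) $ i $ j"
      by (simp add: matrix_matrix_mult_def transpose_def blkB_def blkD_def sum_subtractf mult.commute)
  qed
  show "blkC M ** transpose (blkD M) = blkD M ** transpose (blkC M)"
    unfolding vec_eq_iff
  proof (intro allI)
    fix i j
    have "(\<Sum>k\<in>UNIV. M $ Inr i $ Inl k * M $ Inr j $ Inr k - M $ Inr i $ Inr k * M $ Inr j $ Inl k) = 0"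
      using f[of "Inr i" "Inr j"] by simp
    then show "(blkC M ** transpose (blkD M)) $ i $ j = (blkD M ** transpose (blkC M)) $ i $ j"
      by (simp add: matrix_matrix_mult_def transpose_def blkC_def blkD_def sum_subtractf)
  qed
qed



lemma msub_ldistrib: "A ** (B - C) = A ** B - A ** (C::real^'n::finite^'n)"
  by (simp add: vec_eq_iff matrix_matrix_mult_def sum_subtractf algebra_simps)

lemma mv_inner': "(A *v x) \<bullet> y = (transpose A *v y) \<bullet> (x::real^'n::finite)"
  by (metis mv_inner inner_commute)

lemma linear_mv: "linear (\<lambda>x. (A::real^'n::finite^'m::finite) *v x)" by simp

lemma part2:
  fixes M :: "('n::finite) pmat" and \<Delta>T :: real
  assumes sym: "transpose M ** Jmat ** M = Jmat" and dD: "det (blkD M) \<noteq> 0" and dT: "\<Delta>T \<noteq> 0"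
  and \<Psi>def: "\<Psi> = (\<lambda>x::'n phase. qp (qpart x) (blkC M *v qpart x + blkD M *v ppart x))"
  and ppdef: "pp = (\<lambda>q P. ppart (inv \<Psi> (qp q P)))"
  and QQdef: "QQ = (\<lambda>q P. blkA M *v q + blkB M *v pp q P)"
  and \<Phi>def: "\<Phi> = (\<lambda>x. M *v x)"
  and gooddef: "good = (\<lambda>S::'n phase \<Rightarrow> real. C1_UNIV S \<and>
                (\<forall>q P. ((\<lambda>q'. S (qp q' P)) has_derivative (\<lambda>u. pp q P \<bullet> u)) (at q)
                     \<and> ((\<lambda>P'. S (qp q P')) has_derivative (\<lambda>u. QQ q P \<bullet> u)) (at P)))"
  shows "diffeo_UNIV \<Psi> \<and> invertible (blkD M) \<and>
           (\<exists>S. good S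
              \<and> (\<forall>S'. good S' \<longrightarrow> (\<exists>c. \<forall>y. S' y = S y + c))
              \<and> (\<forall>x. GDERIV (\<lambda>y. (S y - qpart y \<bullet> ppart y) / \<Delta>T) (I1mat *v x + I2mat *v \<Phi> x)
                      :> (transpose Jmat *v ((1 / \<Delta>T) *\<^sub>R (\<Phi> x - x)))))"
proof -
  define A B C D where "A = blkA M" and "B = blkB M" and "C = blkC M" and "D = blkD M"
  have invD: "invertible D" using dD invertible_det_nz D_def by auto
  then obtain Di where DDi: "D ** Di = mat 1" and DiD: "Di ** D = mat 1" unfolding invertible_def by blast
  have S1: "transpose D ** A - transpose B ** C = mat 1"
    and S2: "transpose D ** B = transpose B ** D"
    and S3: "C ** transpose D = D ** transpose C"
    using blocks[OF sym] by (simp_all add: A_def B_def C_def D_def)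
  have DTDiT: "transpose D ** transpose Di = mat 1" using DiD by (metis matrix_transpose_mul transpose_mat)
  have DiTDT: "transpose Di ** transpose D = mat 1" using DDi by (metis matrix_transpose_mul transpose_mat)
  have sym1: "transpose (Di ** C) = Di ** C"
  proof -
    have "Di ** C = Di ** C ** (transpose D ** transpose Di)" by (simp add: DTDiT)
    also have "\<dots> = Di ** (C ** transpose D) ** transpose Di" by (simp add: matrix_mul_assoc)
    also have "\<dots> = Di ** (D ** transpose C) ** transpose Di" by (simp add: S3)
    also have "\<dots> = (Di ** D) ** transpose C ** transpose Di" by (simp add: matrix_mul_assoc)
    also have "\<dots> = transpose (Di ** C)" by (simp add: DiD matrix_transpose_mul)
    finally show ?thesis by simp
  qed
  have sym2: "transpose (B ** Di) = B ** Di"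
  proof -
    have "transpose (B ** Di) = transpose Di ** transpose B ** (D ** Di)" by (simp add: DDi matrix_transpose_mul)
    also have "\<dots> = transpose Di ** (transpose B ** D) ** Di" by (simp add: matrix_mul_assoc)
    also have "\<dots> = transpose Di ** (transpose D ** B) ** Di" by (simp add: S2)
    also have "\<dots> = (transpose Di ** transpose D) ** B ** Di" by (simp add: matrix_mul_assoc)
    also have "\<dots> = B ** Di" by (simp add: DiTDT)
    finally show ?thesis .
  qed
  have S4: "A - B ** Di ** C = transpose Di"
  proof -
    have "transpose Di = transpose Di ** (transpose D ** A - transpose B ** C)" by (simp add: S1)
    also have "\<dots> = (transpose Di ** transpose D) ** A - transpose (B ** Di) ** C"
      by (simp add: msub_ldistrib matrix_mul_assoc matrix_transpose_mul)
    also have "\<dots> = A - B ** Di ** C" by (simp add: DiTDT sym2)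
    finally show ?thesis by simp
  qed
  define \<Psi>i where "\<Psi>i y = qp (qpart y) (Di *v (ppart y - C *v qpart y))" for y :: "'n phase"
  have \<Psi>_eq: "\<Psi> = (\<lambda>x. qp (qpart x) (C *v qpart x + D *v ppart x))" by (simp add: \<Psi>def C_def D_def)
  have inv1: "\<Psi>i (\<Psi> x) = x" for x
    by (simp add: \<Psi>i_def \<Psi>_eq matrix_vector_mul_assoc DiD)
  have inv2: "\<Psi> (\<Psi>i y) = y" for y
    by (simp add: \<Psi>i_def \<Psi>_eq matrix_vector_mul_assoc DDi)
  have inv\<Psi>: "inv \<Psi> = \<Psi>i" by (rule inv_equality) (simp_all add: inv1 inv2)
  have pp_eq: "pp q P = Di *v (P - C *v q)" for q P by (simp add: ppdef inv\<Psi> \<Psi>i_def)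
  have QQ_eq: "QQ q P = transpose Di *v q + (B ** Di) *v P" for q P
  proof -
    have "QQ q P = A *v q + B *v (Di *v (P - C *v q))" by (simp add: QQdef pp_eq A_def B_def)
    also have "\<dots> = (A - B ** Di ** C) *v q + (B ** Di) *v P"
      by (simp add: matrix_vector_mult_diff_distrib matrix_vector_mult_diff_rdistrib matrix_vector_mul_assoc matrix_mul_assoc algebra_simps)
    also have "\<dots> = transpose Di *v q + (B ** Di) *v P" by (simp add: S4)
    finally show ?thesis .
  qed
  have lin\<Psi>: "linear \<Psi>" unfolding \<Psi>_eq
    by (rule linearI) (simp_all add: qp_eq_iff matrix_vector_right_distrib matrix_vector_mult_scaleR scaleR_right_distrib)
  have lin\<Psi>i: "linear \<Psi>i" unfolding \<Psi>i_def[abs_def]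
    by (rule linearI) (simp_all add: qp_eq_iff matrix_vector_right_distrib matrix_vector_mult_diff_distrib
        matrix_vector_mult_scaleR scaleR_right_distrib scaleR_diff_right algebra_simps)
  have C1lin: "C1_UNIV f" if "linear f" for f :: "'n phase \<Rightarrow> 'n phase"
    unfolding C1_UNIV_def
    using that by (intro exI[of _ "\<lambda>_. Blinfun f"])
      (simp add: bounded_linear_Blinfun_apply linear_conv_bounded_linear[symmetric] linear_imp_has_derivative)
  have diffeo: "diffeo_UNIV \<Psi>"
    unfolding diffeo_UNIV_def inv\<Psi>
    by (intro conjI C1lin lin\<Psi> lin\<Psi>i o_bij[of \<Psi>i]) (auto simp: inv1 inv2)
  define G where "G y = qp (Di *v (ppart y - C *v qpart y)) (transpose Di *v qpart y + (B ** Di) *v ppart y)"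
    for y :: "'n phase"
  have G_pp: "G (qp q P) = qp (pp q P) (QQ q P)" for q P by (simp add: G_def pp_eq QQ_eq)
  have linG: "linear G" unfolding G_def[abs_def]
    by (rule linearI) (simp_all add: qp_eq_iff matrix_vector_right_distrib matrix_vector_mult_diff_distrib
        matrix_vector_mult_scaleR scaleR_right_distrib scaleR_diff_right algebra_simps)
  have symG: "G y \<bullet> h = G h \<bullet> y" for y h
  proof -
    have e1: "(Di *v a) \<bullet> b = (transpose Di *v b) \<bullet> a" for a b by (rule mv_inner')
    have e2: "((Di ** C) *v a) \<bullet> b = ((Di ** C) *v b) \<bullet> a" for a b using mv_inner'[of "Di ** C" a b] sym1 by simp
    have e3: "((B ** Di) *v a) \<bullet> b = ((B ** Di) *v b) \<bullet> a" for a b using mv_inner'[of "B ** Di" a b] sym2 by simp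
    show ?thesis
      unfolding G_def inner_split qpart_qp ppart_qp
      unfolding matrix_vector_mult_diff_distrib matrix_vector_mul_assoc inner_diff_left inner_add_left
      unfolding e1[of "ppart y" "qpart h"] e2[of "qpart y" "qpart h"] e3[of "ppart y" "ppart h"] e1[of "ppart h" "qpart y"]
      by linarith
  qed
  define S where "S y = 1/2 * (G y \<bullet> y)" for y
  have dS: "(S has_derivative (\<lambda>h. G y \<bullet> h)) (at y)" for y
  proof -
    have "((\<lambda>y. 1/2 * (G y \<bullet> y)) has_derivative (\<lambda>h. 1/2 * (G y \<bullet> h + G h \<bullet> y))) (at y)"
      by (intro has_derivative_mult_right has_derivative_inner linear_imp_has_derivative[OF linG] has_derivative_ident)
    moreover have "(\<lambda>h. 1/2 * (G y \<bullet> h + G h \<bullet> y)) = (\<lambda>h. G y \<bullet> h)"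
    proof
      fix h show "1/2 * (G y \<bullet> h + G h \<bullet> y) = G y \<bullet> h" unfolding symG[of h y, symmetric] by simp
    qed
    ultimately show ?thesis unfolding S_def[abs_def] by simp
  qed
  have C1S: "C1_UNIV S"
    unfolding C1_UNIV_def
  proof (intro exI[of _ "\<lambda>y. blinfun_inner_left (G y)"] conjI allI)
    fix x show "(S has_derivative blinfun_apply (blinfun_inner_left (G x))) (at x)"
      using dS[of x] by (simp add: inner_commute)
    show "continuous_on UNIV (\<lambda>y. blinfun_inner_left (G y))"
      by (intro bounded_linear.continuous_on[OF bounded_linear_blinfun_inner_left] linear_continuous_on)
        (simp add: linG linear_conv_bounded_linear[symmetric])
  qed
  have lin1: "linear (\<lambda>h. qp h (0::real^'n))" by (rule linearI) (simp_all add: qp_eq_iff)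
  have lin2: "linear (\<lambda>h. qp (0::real^'n) h)" by (rule linearI) (simp_all add: qp_eq_iff)
  have dqp1: "((\<lambda>q'. qp q' P) has_derivative (\<lambda>h. qp h 0)) (at q)" for q P :: "real^'n"
  proof -
    have "((\<lambda>q'. qp q' 0 + qp 0 P) has_derivative (\<lambda>h. qp h 0)) (at q)"
      by (rule has_derivative_add_const[OF linear_imp_has_derivative[OF lin1]])
    then show ?thesis by (simp add: qp_add)
  qed
  have dqp2: "((\<lambda>P'. qp q P') has_derivative (\<lambda>h. qp 0 h)) (at P)" for q P :: "real^'n"
  proof -
    have "((\<lambda>P'. qp 0 P' + qp q 0) has_derivative (\<lambda>h. qp 0 h)) (at P)"
      by (rule has_derivative_add_const[OF linear_imp_has_derivative[OF lin2]])
    then show ?thesis by (simp add: qp_add)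
  qed
  have partials: "((\<lambda>q'. F (qp q' P)) has_derivative (\<lambda>u. pp q P \<bullet> u)) (at q)
             \<and> ((\<lambda>P'. F (qp q P')) has_derivative (\<lambda>u. QQ q P \<bullet> u)) (at P)"
    if dF: "\<And>y. (F has_derivative (\<lambda>h. G y \<bullet> h)) (at y)" for F q P
  proof
    have "((F \<circ> (\<lambda>q'. qp q' P)) has_derivative ((\<lambda>h. G (qp q P) \<bullet> h) \<circ> (\<lambda>h. qp h 0))) (at q)"
      by (rule diff_chain_at[OF dqp1 dF])
    then show "((\<lambda>q'. F (qp q' P)) has_derivative (\<lambda>u. pp q P \<bullet> u)) (at q)"
      by (simp add: o_def G_pp inner_qp)
    have "((F \<circ> (\<lambda>P'. qp q P')) has_derivative ((\<lambda>h. G (qp q P) \<bullet> h) \<circ> (\<lambda>h. qp 0 h))) (at P)"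
      by (rule diff_chain_at[OF dqp2 dF])
    then show "((\<lambda>P'. F (qp q P')) has_derivative (\<lambda>u. QQ q P \<bullet> u)) (at P)"
      by (simp add: o_def G_pp inner_qp)
  qed
  have goodS: "good S" unfolding gooddef using C1S partials[OF dS] by blast
  have uniq: "\<exists>c. \<forall>y. S' y = S y + c" if gS': "good S'" for S'
  proof -
    from gS' obtain f' where df': "\<And>x. (S' has_derivative blinfun_apply (f' x)) (at x)"
      unfolding gooddef C1_UNIV_def by blast
    have pS': "((\<lambda>q'. S' (qp q' P)) has_derivative (\<lambda>u. pp q P \<bullet> u)) (at q)"
         "((\<lambda>P'. S' (qp q P')) has_derivative (\<lambda>u. QQ q P \<bullet> u)) (at P)" for q P
      using gS' unfolding gooddef by blast+
    have dS': "(S' has_derivative (\<lambda>h. G y \<bullet> h)) (at y)" for y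
    proof -
      define q P where "q = qpart y" and "P = ppart y"
      have y: "y = qp q P" by (simp add: q_def P_def)
      have "((S' \<circ> (\<lambda>q'. qp q' P)) has_derivative (blinfun_apply (f' y) \<circ> (\<lambda>h. qp h 0))) (at q)"
        by (rule diff_chain_at[OF dqp1]) (simp add: y[symmetric] df')
      then have "(blinfun_apply (f' y) \<circ> (\<lambda>h. qp h 0)) = (\<lambda>u. pp q P \<bullet> u)"
        using pS'(1)[of P q] by (intro has_derivative_unique) (auto simp: o_def)
      then have h1: "blinfun_apply (f' y) (qp a 0) = pp q P \<bullet> a" for a by (metis o_apply)
      have "((S' \<circ> (\<lambda>P'. qp q P')) has_derivative (blinfun_apply (f' y) \<circ> (\<lambda>h. qp 0 h))) (at P)"
        by (rule diff_chain_at[OF dqp2]) (simp add: y[symmetric] df')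
      then have "(blinfun_apply (f' y) \<circ> (\<lambda>h. qp 0 h)) = (\<lambda>u. QQ q P \<bullet> u)"
        using pS'(2)[of q P] by (intro has_derivative_unique) (auto simp: o_def)
      then have h2: "blinfun_apply (f' y) (qp 0 a) = QQ q P \<bullet> a" for a by (metis o_apply)
      have "blinfun_apply (f' y) = (\<lambda>h. G y \<bullet> h)"
      proof
        fix h
        have "blinfun_apply (f' y) h = blinfun_apply (f' y) (qp (qpart h) 0 + qp 0 (ppart h))"
          by (simp add: qp_add)
        also have "\<dots> = pp q P \<bullet> qpart h + QQ q P \<bullet> ppart h" by (simp add: blinfun.add_right h1 h2)
        also have "\<dots> = G y \<bullet> h" by (simp add: y G_pp inner_split)
        finally show "blinfun_apply (f' y) h = G y \<bullet> h" .
      qed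
      then show ?thesis using df'[of y] by simp
    qed
    have "((\<lambda>y. S' y - S y) has_derivative (\<lambda>h. 0)) (at y within UNIV)" for y
      using has_derivative_diff[OF dS'[of y] dS[of y]] by simp
    then obtain c where "\<forall>y\<in>UNIV. S' y - S y = c"
      using has_derivative_zero_constant[OF convex_UNIV] by blast
    then show ?thesis by (intro exI[of _ c]) (auto simp: algebra_simps)
  qed
  have grad: "GDERIV (\<lambda>y. (S y - qpart y \<bullet> ppart y) / \<Delta>T) (I1mat *v x + I2mat *v \<Phi> x)
                      :> (transpose Jmat *v ((1 / \<Delta>T) *\<^sub>R (\<Phi> x - x)))" for x
  proof -
    define q p P Q where "q = qpart x" and "p = ppart x" and "P = ppart (M *v x)" and "Q = qpart (M *v x)"
    define y0 where "y0 = qp q P"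
    have y0: "I1mat *v x + I2mat *v \<Phi> x = y0" by (simp add: I12 y0_def q_def P_def \<Phi>def)
    have Peq: "P = C *v q + D *v p" by (simp add: P_def M_ppart q_def p_def C_def D_def)
    have ppq: "pp q P = p" by (simp add: pp_eq Peq matrix_vector_mul_assoc DiD)
    have "QQ q P = A *v q + B *v p" unfolding QQdef ppq by (simp add: A_def B_def)
    then have QQq: "QQ q P = Q" by (simp add: Q_def M_qpart q_def p_def A_def B_def)
    have Gy0: "G y0 = qp p Q" by (simp add: y0_def G_pp ppq QQq)
    have d: "((\<lambda>y. (S y - qpart y \<bullet> ppart y) / \<Delta>T) has_derivative
        (\<lambda>h. - (S y0 - qpart y0 \<bullet> ppart y0) * (inverse \<Delta>T * 0 * inverse \<Delta>T) +
              (G y0 \<bullet> h - (qpart y0 \<bullet> ppart h + qpart h \<bullet> ppart y0)) / \<Delta>T)) (at y0)"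
      by (intro has_derivative_divide has_derivative_diff dS has_derivative_inner
          linear_imp_has_derivative[OF linear_qpart] linear_imp_has_derivative[OF linear_ppart]
          has_derivative_const dT)
    have "(\<lambda>h. - (S y0 - qpart y0 \<bullet> ppart y0) * (inverse \<Delta>T * 0 * inverse \<Delta>T) +
              (G y0 \<bullet> h - (qpart y0 \<bullet> ppart h + qpart h \<bullet> ppart y0)) / \<Delta>T)
        = (\<lambda>h. h \<bullet> (transpose Jmat *v ((1 / \<Delta>T) *\<^sub>R (\<Phi> x - x))))"
    proof
      fix h
      show "- (S y0 - qpart y0 \<bullet> ppart y0) * (inverse \<Delta>T * 0 * inverse \<Delta>T) +
              (G y0 \<bullet> h - (qpart y0 \<bullet> ppart h + qpart h \<bullet> ppart y0)) / \<Delta>T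
            = h \<bullet> (transpose Jmat *v ((1 / \<Delta>T) *\<^sub>R (\<Phi> x - x)))"
        unfolding JT_mult Gy0
        by (simp add: \<Phi>def inner_split y0_def q_def p_def P_def Q_def inner_diff_right inner_diff_left
            inner_commute field_simps)
          (simp add: add_divide_distrib diff_divide_distrib)
    qed
    then show ?thesis unfolding y0 has_derivative_def[symmetric] using d by (simp add: gderiv_def)
  qed
  show ?thesis
    using diffeo invD goodS uniq grad by (auto simp: D_def)
qed


theorem theorem5:
  fixes H :: "('n::finite) pmat"
  assumes symH: "transpose H = H"
  shows "(\<forall>t::real. \<not> t islimpt {s. det (blkD (Mflow H s)) = 0})
   \<and> (\<forall>\<Delta>T::real. det (blkD (Mflow H \<Delta>T)) \<noteq> 0 \<and> \<Delta>T \<noteq> 0 \<longrightarrow>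
       (let M = Mflow H \<Delta>T;
            \<Psi> = (\<lambda>x::'n phase. qp (qpart x) (blkC M *v qpart x + blkD M *v ppart x));
            pp = (\<lambda>q P. ppart (inv \<Psi> (qp q P)));
            QQ = (\<lambda>q P. blkA M *v q + blkB M *v pp q P);
            \<Phi> = (\<lambda>x. M *v x);
            good = (\<lambda>S::'n phase \<Rightarrow> real. C1_UNIV S \<and>
                (\<forall>q P. ((\<lambda>q'. S (qp q' P)) has_derivative (\<lambda>u. pp q P \<bullet> u)) (at q)
                     \<and> ((\<lambda>P'. S (qp q P')) has_derivative (\<lambda>u. QQ q P \<bullet> u)) (at P)))
        in diffeo_UNIV \<Psi> \<and> invertible (blkD M) \<and>
           (\<exists>S. good S
              \<and> (\<forall>S'. good S' \<longrightarrow> (\<exists>c. \<forall>y. S' y = S y + c))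
              \<and> (\<forall>x. GDERIV (\<lambda>y. (S y - qpart y \<bullet> ppart y) / \<Delta>T) (I1mat *v x + I2mat *v \<Phi> x)
                      :> (transpose Jmat *v ((1 / \<Delta>T) *\<^sub>R (\<Phi> x - x)))))))"
proof -
  have sy: "\<And>t. transpose (Mflow H t) ** Jmat ** Mflow H t = Jmat" by (rule sympl[OF symH])
  show ?thesis
    apply (intro conjI allI impI)
    subgoal for t using part1[of t "Jmat ** H"] by (simp add: Mflow_def)
    subgoal for \<Delta>T
      apply (unfold Let_def)
      apply (rule part2[OF sy _ _ refl refl refl refl refl])
      apply auto
      done
    done
qed

end
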